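(* Let $V$ be a vector space over a field $\mathbb{K}$, $F$ a bilinear form on $V$, $Q=Q_F$ (i.e. $Q(x)=F(x,x)$), and let $F'=F+A$ with $A$ an alternating bilinear form on $V$ (so $Q_{F'}=Q$). Let $\rho_F,\rho_{F'}:\mathrm{Cl}(V,Q)\to\mathrm{End}(\bigwedge(V))$ be the representations $\rho_F=\bar\Lambda_F$, $\rho_{F'}=\bar\Lambda_{F'}$. Then these representations are equivalent; namely $$\rho_{F'}(a)=\bar\lambda_A\circ\rho_F(a)\circ\bar\lambda_A^{-1}\quad\text{for all }a\in\mathrm{Cl}(V,Q).$$
   Context: $\mathrm{Cl}(V,Q)=\mathcal{T}(V)/I(Q)$ where $I(Q)$ is the two-sided ideal of the tensor algebra generated by $x\otimes x-Q(x)1$; $\bigwedge(V)=\mathrm{Cl}(V,0)$ is the exterior algebra. For $f\in V^*$, $\bar{i}_f$ is the unique linear map on $\bigwedge(V)$ with $\bar{i}_f(1)=0$ and $\bar{i}_f(x\wedge w)=f(x)w-x\wedge\bar{i}_f(w)$ ($x\in V$); for a bilinear form $G$, $\bar{i}_x^G:=\bar{i}_{g_x}$ with $g_x(y)=G(x,y)$. For $x\in V$ the operator $\bar e_x+\bar{i}_x^G$ on $\bigwedge(V)$ (with $\bar e_x(w)=x\wedge w$) squares to $G(x,x)$, so $x\mapsto \bar e_x+\bar i_x^G$ extends uniquely to an algebra homomorphism $\bar\Lambda_G:\mathrm{Cl}(V,Q_G)\to\mathrm{End}(\bigwedge(V))$, where $Q_G(x)=G(x,x)$. For an alternating form $A$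 (so $Q_A=0$), $\bar\lambda_A:\bigwedge(V)\to\bigwedge(V)$ is $\bar\lambda_A(u)=\bar\Lambda_A(u)(1)$; it is a linear bijection with inverse $\bar\lambda_{-A}$. *)

theory Defs
  imports Complex_Main
begin

text \<open>The vector space V is the whole type 'v with scalar
multiplication scale over the field 'k.  The free associative algebra on the set V
is modelled by finitely supported coefficient functions on words ('v list).
The tensor algebra T(V) and Cl(V,Q) = T(V)/I(Q) are obtained together as the
quotient of the free algebra by the two-sided ideal generated by the multilinearity
relations (giving T(V)) and by x*x - Q(x) 1.  Elements of Cl(V,Q) are
equivalence classes (sets of representatives).\<close>

type_synonym ('v,'k) fa = "'v list \<Rightarrow> 'k"

definition FA :: "('v,'k::field) fa set" where
  "FA = {p. finite {w. p w \<noteq> 0}}"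

definition word :: "'v list \<Rightarrow> ('v,'k::field) fa" where
  "word w = (\<lambda>u. if u = w then 1 else 0)"

definition fadd :: "('v,'k::field) fa \<Rightarrow> ('v,'k) fa \<Rightarrow> ('v,'k) fa" where
  "fadd p q = (\<lambda>w. p w + q w)"

definition fsub :: "('v,'k::field) fa \<Rightarrow> ('v,'k) fa \<Rightarrow> ('v,'k) fa" where
  "fsub p q = (\<lambda>w. p w - q w)"

definition fsmult :: "'k::field \<Rightarrow> ('v,'k) fa \<Rightarrow> ('v,'k) fa" where
  "fsmult c p = (\<lambda>w. c * p w)"

definition fmul :: "('v,'k::field) fa \<Rightarrow> ('v,'k) fa \<Rightarrow> ('v,'k) fa" where
  "fmul p q = (\<lambda>w. \<Sum>i\<le>length w. p (take i w) * q (drop i w))"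

definition iota :: "'v \<Rightarrow> ('v,'k::field) fa" where
  "iota x = word [x]"

definition cl_gens :: "('k::field \<Rightarrow> 'v::ab_group_add \<Rightarrow> 'v) \<Rightarrow> ('v \<Rightarrow> 'k) \<Rightarrow> ('v,'k) fa set" where
  "cl_gens scale Q =
     {fsub (fsub (iota (x + y)) (iota x)) (iota y) | x y. True}
   \<union> {fsub (iota (scale c x)) (fsmult c (iota x)) | c x. True}
   \<union> {fsub (fmul (iota x) (iota x)) (fsmult (Q x) (word [])) | x. True}"

inductive_set cl_ideal :: "('k::field \<Rightarrow> 'v::ab_group_add \<Rightarrow> 'v) \<Rightarrow> ('v \<Rightarrow> 'k) \<Rightarrow> ('v,'k) fa set"
  for scale Q where
  zero: "(\<lambda>_. 0) \<in> cl_ideal scale Q"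
| add: "p \<in> cl_ideal scale Q \<Longrightarrow> q \<in> cl_ideal scale Q \<Longrightarrow> fadd p q \<in> cl_ideal scale Q"
| smult: "p \<in> cl_ideal scale Q \<Longrightarrow> fsmult c p \<in> cl_ideal scale Q"
| gen: "r \<in> cl_gens scale Q \<Longrightarrow> fmul (fmul (word u) r) (word v) \<in> cl_ideal scale Q"

definition cl_rel :: "('k::field \<Rightarrow> 'v::ab_group_add \<Rightarrow> 'v) \<Rightarrow> ('v \<Rightarrow> 'k) \<Rightarrow> (('v,'k) fa \<times> ('v,'k) fa) set" where
  "cl_rel scale Q = {(p, q). p \<in> FA \<and> q \<in> FA \<and> fsub p q \<in> cl_ideal scale Q}"

definition Cl :: "('k::field \<Rightarrow> 'v::ab_group_add \<Rightarrow> 'v) \<Rightarrow> ('v \<Rightarrow> 'k) \<Rightarrow> ('v,'k) fa set set" where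
  "Cl scale Q = FA // cl_rel scale Q"

definition cls :: "('k::field \<Rightarrow> 'v::ab_group_add \<Rightarrow> 'v) \<Rightarrow> ('v \<Rightarrow> 'k) \<Rightarrow> ('v,'k) fa \<Rightarrow> ('v,'k) fa set" where
  "cls scale Q p = cl_rel scale Q `` {p}"

definition Ext :: "('k::field \<Rightarrow> 'v::ab_group_add \<Rightarrow> 'v) \<Rightarrow> ('v,'k) fa set set" where
  "Ext scale = Cl scale (\<lambda>_. 0)"

definition lin_ext :: "('v list \<Rightarrow> ('v,'k::field) fa) \<Rightarrow> ('v,'k) fa \<Rightarrow> ('v,'k) fa" where
  "lin_ext g p = (\<lambda>u. \<Sum>w\<in>{w. p w \<noteq> 0}. p w * g w u)"

primrec iw :: "('v \<Rightarrow> 'k::field) \<Rightarrow> 'v list \<Rightarrow> ('v,'k) fa" where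
  "iw f [] = (\<lambda>_. 0)"
| "iw f (x # w) = fsub (fsmult (f x) (word w)) (fmul (iota x) (iw f w))"

definition ifree :: "('v \<Rightarrow> 'k::field) \<Rightarrow> ('v,'k) fa \<Rightarrow> ('v,'k) fa" where
  "ifree f = lin_ext (iw f)"

definition efree :: "'v \<Rightarrow> ('v,'k::field) fa \<Rightarrow> ('v,'k) fa" where
  "efree x p = fmul (iota x) p"

definition opv :: "('v \<Rightarrow> 'v \<Rightarrow> 'k::field) \<Rightarrow> 'v \<Rightarrow> ('v,'k) fa \<Rightarrow> ('v,'k) fa" where
  "opv G x p = fadd (efree x p) (ifree (G x) p)"

primrec opword :: "('v \<Rightarrow> 'v \<Rightarrow> 'k::field) \<Rightarrow> 'v list \<Rightarrow> ('v,'k) fa \<Rightarrow> ('v,'k) fa" where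
  "opword G [] = id"
| "opword G (x # w) = opv G x \<circ> opword G w"

definition rhofree :: "('v \<Rightarrow> 'v \<Rightarrow> 'k::field) \<Rightarrow> ('v,'k) fa \<Rightarrow> ('v,'k) fa \<Rightarrow> ('v,'k) fa" where
  "rhofree G t p = lin_ext (\<lambda>w. opword G w p) t"

definition Lambda_bar :: "('k::field \<Rightarrow> 'v::ab_group_add \<Rightarrow> 'v) \<Rightarrow> ('v \<Rightarrow> 'v \<Rightarrow> 'k) \<Rightarrow> ('v,'k) fa set
    \<Rightarrow> ('v,'k) fa set \<Rightarrow> ('v,'k) fa set" where
  "Lambda_bar scale G a W = cls scale (\<lambda>_. 0) (rhofree G (SOME t. t \<in> a) (SOME p. p \<in> W))"

definition lambda_bar :: "('k::field \<Rightarrow> 'v::ab_group_add \<Rightarrow> 'v) \<Rightarrow> ('v \<Rightarrow> 'v \<Rightarrow> 'k) \<Rightarrow> ('v,'k) fa set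
    \<Rightarrow> ('v,'k) fa set" where
  "lambda_bar scale A u = Lambda_bar scale A u (cls scale (\<lambda>_. 0) (word []))"

definition bilinear_form :: "('k::field \<Rightarrow> 'v::ab_group_add \<Rightarrow> 'v) \<Rightarrow> ('v \<Rightarrow> 'v \<Rightarrow> 'k) \<Rightarrow> bool" where
  "bilinear_form scale B \<longleftrightarrow>
     (\<forall>x y z. B (x + y) z = B x z + B y z) \<and>
     (\<forall>x y z. B x (y + z) = B x y + B x z) \<and>
     (\<forall>c x y. B (scale c x) y = c * B x y) \<and>
     (\<forall>c x y. B x (scale c y) = c * B x y)"

definition alternating_form :: "('k::field \<Rightarrow> 'v::ab_group_add \<Rightarrow> 'v) \<Rightarrow> ('v \<Rightarrow> 'v \<Rightarrow> 'k) \<Rightarrow> bool" where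
  "alternating_form scale A \<longleftrightarrow> bilinear_form scale A \<and> (\<forall>x. A x x = 0)"

end

theory Submission
  imports Defs "HOL-Library.Function_Algebras"
begin


declare plus_fun_apply[simp del] minus_apply[simp del] uminus_apply[simp del] zero_fun_apply[simp del]

lemma fsmult_apply: "fsmult c p w = c * p w" by (simp add: fsmult_def)
lemmas fa_simps = plus_fun_apply minus_apply uminus_apply zero_fun_apply fsmult_apply

lemma fadd_eq: "fadd p q = p + q" by (simp add: fadd_def fun_eq_iff fa_simps)
lemma fsub_eq: "fsub p q = p - q" by (simp add: fsub_def fun_eq_iff fa_simps)
lemma zero_eq[simp]: "(\<lambda>_. 0) = 0" by (simp add: fun_eq_iff fa_simps)

lemma word_apply: "word w u = (if u = w then 1 else 0)" by (simp add: word_def)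

lemma fsmult_add[simp]: "fsmult c (p + q) = fsmult c p + fsmult c q"
  by (simp add: fun_eq_iff fa_simps algebra_simps)
lemma fsmult_diff[simp]: "fsmult c (p - q) = fsmult c p - fsmult c q"
  by (simp add: fun_eq_iff fa_simps algebra_simps)
lemma fsmult_zero[simp]: "fsmult c 0 = 0" "fsmult 0 p = 0" "fsmult 1 p = p"
  by (simp_all add: fun_eq_iff fa_simps)
lemma fsmult_fsmult[simp]: "fsmult c (fsmult d p) = fsmult (c * d) p"
  by (simp add: fun_eq_iff fa_simps)
lemma fsmult_minus[simp]: "fsmult c (- p) = - fsmult c p"
  by (simp add: fun_eq_iff fa_simps)
lemma fsmult_addc: "fsmult (c + d) p = fsmult c p + fsmult d p"
  by (simp add: fun_eq_iff fa_simps algebra_simps)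
lemma fsmult_diffc: "fsmult (c - d) p = fsmult c p - fsmult d p"
  by (simp add: fun_eq_iff fa_simps algebra_simps)

lemma FA_iff: "p \<in> FA \<longleftrightarrow> finite {w. p w \<noteq> 0}" by (simp add: FA_def fa_simps)

lemma FA_zero[simp]: "0 \<in> FA" by (simp add: FA_def fa_simps)
lemma FA_word[simp]: "(word w :: ('v,'k::field) fa) \<in> FA"
proof -
  have "{u. (word w :: ('v,'k::field) fa) u \<noteq> 0} \<subseteq> {w}" by (auto simp: word_def)
  then show ?thesis unfolding FA_def by (auto intro: finite_subset)
qed
lemma FA_add[simp]: "p \<in> FA \<Longrightarrow> q \<in> FA \<Longrightarrow> p + q \<in> FA"
proof -
  assume "p \<in> FA" "q \<in> FA"
  moreover have "{w. (p + q) w \<noteq> 0} \<subseteq> {w. p w \<noteq> 0} \<union> {w. q w \<noteq> 0}" by (auto simp: fa_simps)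
  ultimately show ?thesis unfolding FA_def by (auto intro: finite_subset)
qed
lemma FA_smult[simp]: "p \<in> FA \<Longrightarrow> fsmult c p \<in> FA"
proof -
  assume "p \<in> FA"
  moreover have "{w. fsmult c p w \<noteq> 0} \<subseteq> {w. p w \<noteq> 0}" by (auto simp: fa_simps)
  ultimately show ?thesis unfolding FA_def by (auto intro: finite_subset)
qed
lemma FA_uminus[simp]: "p \<in> FA \<Longrightarrow> - p \<in> FA"
proof -
  assume "p \<in> FA"
  moreover have "- p = fsmult (-1) p" by (simp add: fun_eq_iff fa_simps)
  ultimately show ?thesis by simp
qed
lemma FA_diff[simp]: "p \<in> FA \<Longrightarrow> q \<in> FA \<Longrightarrow> p - q \<in> FA"
  using FA_add[of p "-q"] by simp

lemma FA_induct[consumes 1, case_names zero step]: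
  assumes "p \<in> FA" and "P 0"
    and "\<And>p a c. p \<in> FA \<Longrightarrow> P p \<Longrightarrow> P (p + fsmult c (word a))"
  shows "P p"
proof -
  have "\<And>p. {w. p w \<noteq> 0} \<subseteq> S \<Longrightarrow> P p" if "finite S" for S
    using that
  proof (induction S)
    case empty
    then have "p = 0" by (auto simp: fun_eq_iff fa_simps)
    then show ?case using assms(2) by (simp only:)
  next
    case (insert a S p)
    define p' where "p' = p(a := 0)"
    have sub: "{w. p' w \<noteq> 0} \<subseteq> S" using insert.prems by (auto simp: p'_def)
    have "P p'" using insert.IH[OF sub] .
    moreover have "p' \<in> FA" using insert.hyps sub unfolding FA_def
      by (auto intro: finite_subset)
    moreover have "p = p' + fsmult (p a) (word a)"
      by (simp add: fun_eq_iff fa_simps p'_def word_def)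
    ultimately show ?case using assms(3) by metis
  qed
  then show ?thesis using assms(1) unfolding FA_def by blast
qed

lemma fmul_word_left:
  "fmul (word u) p w = (if take (length u) w = u then p (drop (length u) w) else 0)"
proof -
  have "fmul (word u) p w = (\<Sum>i\<le>length w. if i = length u then
          (if take (length u) w = u then p (drop (length u) w) else 0) else 0)"
    unfolding fmul_def
  proof (rule sum.cong[OF refl])
    fix i assume i: "i \<in> {..length w}"
    show "word u (take i w) * p (drop i w) = (if i = length u then
          (if take (length u) w = u then p (drop (length u) w) else 0) else 0)"
      using i by (auto simp: word_def)
  qed
  also have "\<dots> = (if take (length u) w = u then p (drop (length u) w) else 0)"
  proof (cases "take (length u) w = u")
    case True
    then have "min (length w) (length u) = length u" by (metis length_take)
    then have "length u \<le> length w" by (simp add: min_def split: if_splits)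
    then show ?thesis using True by (simp add: sum.delta)
  qed (simp)
  finally show ?thesis .
qed

lemma fmul_word_word: "fmul (word u) (word v) = word (u @ v)"
proof (rule ext)
  fix w
  show "fmul (word u) (word v) w = word (u @ v) w"
  proof -
    have key: "(take (length u) w = u \<and> drop (length u) w = v) \<longleftrightarrow> w = u @ v"
      using append_eq_conv_conj[of u v w] by auto
    show ?thesis unfolding fmul_word_left
      using key by (auto simp add: word_def)
  qed
qed

lemma fmul_add_left: "fmul (p + q) r = fmul p r + fmul q r"
  by (simp add: fmul_def fun_eq_iff fa_simps algebra_simps sum.distrib)
lemma fmul_diff_left: "fmul (p - q) r = fmul p r - fmul q r"
  by (simp add: fmul_def fun_eq_iff fa_simps algebra_simps sum_subtractf)
lemma fmul_smult_left: "fmul (fsmult c p) r = fsmult c (fmul p r)"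
  by (simp add: fmul_def fun_eq_iff fa_simps algebra_simps sum_distrib_left)
lemma fmul_add_right: "fmul r (p + q) = fmul r p + fmul r q"
  by (simp add: fmul_def fun_eq_iff fa_simps algebra_simps sum.distrib)
lemma fmul_diff_right: "fmul r (p - q) = fmul r p - fmul r q"
  by (simp add: fmul_def fun_eq_iff fa_simps algebra_simps sum_subtractf)
lemma fmul_smult_right: "fmul r (fsmult c p) = fsmult c (fmul r p)"
  by (simp add: fmul_def fun_eq_iff fa_simps algebra_simps sum_distrib_left)
lemma fmul_zero_right: "fmul r 0 = 0"
  by (simp add: fmul_def fun_eq_iff fa_simps)

lemma efree_apply:
  "efree x p w = (case w of [] \<Rightarrow> 0 | y # w' \<Rightarrow> if y = x then p w' else 0)"
  unfolding efree_def iota_def fmul_word_left by (cases w) auto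

lemma efree_add[simp]: "efree x (p + q) = efree x p + efree x q"
  by (simp add: efree_def fmul_add_right)
lemma efree_diff[simp]: "efree x (p - q) = efree x p - efree x q"
  by (simp add: efree_def fmul_diff_right)
lemma efree_smult[simp]: "efree x (fsmult c p) = fsmult c (efree x p)"
  by (simp add: efree_def fmul_smult_right)
lemma efree_zero[simp]: "efree x 0 = 0"
  by (simp add: efree_def fmul_zero_right)
lemma efree_word[simp]: "efree x (word w) = word (x # w)"
  by (simp add: efree_def iota_def fmul_word_word)
lemma efree_minus[simp]: "efree x (- p) = - efree x p"
  using efree_diff[of x 0 p] by simp

lemma FA_efree[simp]: "p \<in> FA \<Longrightarrow> efree x p \<in> FA"
proof -
  assume p: "p \<in> FA"
  have "{w. efree x p w \<noteq> 0} \<subseteq> (Cons x) ` {w. p w \<noteq> 0}"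
  proof
    fix w assume "w \<in> {w. efree x p w \<noteq> 0}"
    then show "w \<in> (Cons x) ` {w. p w \<noteq> 0}"
      by (cases w) (auto simp: efree_apply split: if_splits)
  qed
  then show ?thesis using p unfolding FA_def by (auto intro: finite_subset)
qed

lemma lin_ext_superset:
  assumes "finite S" "{w. p w \<noteq> 0} \<subseteq> S"
  shows "lin_ext g p u = (\<Sum>w\<in>S. p w * g w u)"
  unfolding lin_ext_def using assms by (intro sum.mono_neutral_left) (auto simp: fa_simps)

lemma lin_ext_add:
  assumes "p \<in> FA" "q \<in> FA"
  shows "lin_ext g (p + q) = lin_ext g p + lin_ext g q"
proof (rule ext)
  fix u
  let ?S = "{w. p w \<noteq> 0} \<union> {w. q w \<noteq> 0}"
  have f: "finite ?S" using assms by (simp add: FA_def)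
  have "lin_ext g (p + q) u = (\<Sum>w\<in>?S. (p + q) w * g w u)"
    by (rule lin_ext_superset[OF f]) (auto simp: fa_simps)
  also have "\<dots> = (\<Sum>w\<in>?S. p w * g w u) + (\<Sum>w\<in>?S. q w * g w u)"
    by (simp add: fa_simps algebra_simps sum.distrib)
  also have "\<dots> = lin_ext g p u + lin_ext g q u"
    using lin_ext_superset[OF f, of p g u] lin_ext_superset[OF f, of q g u] by (auto simp: fa_simps)
  finally show "lin_ext g (p + q) u = (lin_ext g p + lin_ext g q) u" by (simp add: fa_simps)
qed

lemma lin_ext_smult:
  assumes "p \<in> FA"
  shows "lin_ext g (fsmult c p) = fsmult c (lin_ext g p)"
proof (rule ext)
  fix u
  let ?S = "{w. p w \<noteq> 0}"
  have f: "finite ?S" using assms by (simp add: FA_def)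
  have "lin_ext g (fsmult c p) u = (\<Sum>w\<in>?S. (fsmult c p) w * g w u)"
    by (rule lin_ext_superset[OF f]) (auto simp: fa_simps)
  also have "\<dots> = c * (\<Sum>w\<in>?S. p w * g w u)"
    by (simp add: fa_simps algebra_simps sum_distrib_left)
  finally show "lin_ext g (fsmult c p) u = fsmult c (lin_ext g p) u"
    by (simp add: lin_ext_def fa_simps)
qed

lemma lin_ext_zero[simp]: "lin_ext g 0 = 0"
  by (simp add: lin_ext_def fun_eq_iff fa_simps)

lemma lin_ext_word[simp]: "lin_ext g (word w) = g w"
proof -
  have "{u. word w u \<noteq> (0::'k::field)} = {w}" by (auto simp: word_def)
  then show ?thesis by (simp add: lin_ext_def fun_eq_iff fa_simps word_def)
qed

lemma lin_ext_gadd: "lin_ext (\<lambda>w. g1 w + g2 w) p = lin_ext g1 p + lin_ext g2 p"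
  by (simp add: lin_ext_def fun_eq_iff fa_simps algebra_simps sum.distrib)
lemma lin_ext_gdiff: "lin_ext (\<lambda>w. g1 w - g2 w) p = lin_ext g1 p - lin_ext g2 p"
  by (simp add: lin_ext_def fun_eq_iff fa_simps algebra_simps sum_subtractf)
lemma lin_ext_gsmult: "lin_ext (\<lambda>w. fsmult c (g w)) p = fsmult c (lin_ext g p)"
  by (simp add: lin_ext_def fun_eq_iff fa_simps algebra_simps sum_distrib_left)
lemma lin_ext_gzero: "lin_ext (\<lambda>w. 0) p = 0"
  by (simp add: lin_ext_def fun_eq_iff fa_simps)

lemma FA_lin_ext:
  assumes "p \<in> FA" "\<And>w. g w \<in> FA"
  shows "lin_ext g p \<in> FA"
  using assms(1)
proof (induct rule: FA_induct)
  case zero then show ?case by simp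
next
  case (step p a c)
  then show ?case by (simp add: lin_ext_add lin_ext_smult assms(2))
qed

section \<open>linear operators\<close>

definition linop :: "(('v,'k::field) fa \<Rightarrow> ('v,'k) fa) \<Rightarrow> bool" where
  "linop T \<longleftrightarrow> (\<forall>p\<in>FA. \<forall>q\<in>FA. T (p + q) = T p + T q) \<and> (\<forall>c. \<forall>p\<in>FA. T (fsmult c p) = fsmult c (T p))"

definition presFA :: "(('v,'k::field) fa \<Rightarrow> ('v,'k) fa) \<Rightarrow> bool" where
  "presFA T \<longleftrightarrow> (\<forall>p\<in>FA. T p \<in> FA)"

lemma linopD:
  "linop T \<Longrightarrow> p \<in> FA \<Longrightarrow> q \<in> FA \<Longrightarrow> T (p + q) = T p + T q"
  "linop T \<Longrightarrow> p \<in> FA \<Longrightarrow> T (fsmult c p) = fsmult c (T p)"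
  by (auto simp: linop_def)

lemma linop_zero: "linop T \<Longrightarrow> T 0 = 0"
  using linopD(2)[of T 0 0] by simp

lemma linop_diff: "linop T \<Longrightarrow> p \<in> FA \<Longrightarrow> q \<in> FA \<Longrightarrow> T (p - q) = T p - T q"
proof -
  assume a: "linop T" "p \<in> FA" "q \<in> FA"
  have e: "p - q = p + fsmult (-1) q" by (simp add: fun_eq_iff fa_simps)
  have "T (p - q) = T p + fsmult (-1) (T q)" unfolding e
    using a linopD(1)[OF a(1) a(2) FA_smult[OF a(3)]] linopD(2)[OF a(1) a(3)] by simp
  then show ?thesis by (simp add: fun_eq_iff fa_simps)
qed

lemma linop_ext:
  assumes "linop T" "p \<in> FA"
  shows "T p = lin_ext (\<lambda>w. T (word w)) p"
  using assms(2)
proof (induct rule: FA_induct)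
  case zero then show ?case using linop_zero[OF assms(1)] by simp
next
  case (step p a c)
  then show ?case using assms(1) by (simp add: lin_ext_add lin_ext_smult linopD)
qed

lemma linop_eq:
  assumes "linop T" "linop S" "\<And>w. T (word w) = S (word w)" "p \<in> FA"
  shows "T p = S p"
  using linop_ext[OF assms(1,4)] linop_ext[OF assms(2,4)] assms(3) by simp

lemma linop_lin_ext: "linop (lin_ext g)"
  by (simp add: linop_def lin_ext_add lin_ext_smult)
lemma linop_id: "linop (\<lambda>p. p)" by (simp add: linop_def)
lemma linop_comp: "linop T \<Longrightarrow> linop S \<Longrightarrow> presFA S \<Longrightarrow> linop (\<lambda>p. T (S p))"
  by (simp add: linop_def presFA_def)
lemma linop_plus: "linop T \<Longrightarrow> linop S \<Longrightarrow> linop (\<lambda>p. T p + S p)"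
  by (simp add: linop_def)
lemma linop_minus: "linop T \<Longrightarrow> linop S \<Longrightarrow> linop (\<lambda>p. T p - S p)"
  by (simp add: linop_def)
lemma linop_smult: "linop T \<Longrightarrow> linop (\<lambda>p. fsmult c (T p))"
  by (simp add: linop_def mult.commute)
lemma linop_smult_id: "linop (\<lambda>p. fsmult c p)"
  by (simp add: linop_def mult.commute)
lemma linop_zeroop: "linop (\<lambda>p. 0)"
  by (simp add: linop_def fun_eq_iff fa_simps)
lemma linop_efree: "linop (efree x)"
  by (simp add: linop_def)

lemma presFA_lin_ext: "(\<And>w. g w \<in> FA) \<Longrightarrow> presFA (lin_ext g)"
  by (simp add: presFA_def FA_lin_ext)
lemma presFA_efree: "presFA (efree x)" by (simp add: presFA_def)



section \<open>interior product\<close>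

lemma FA_iw[simp]: "iw f w \<in> FA"
  by (induction w) (simp_all add: zero_eq fsub_eq efree_def[symmetric])

lemma iw_Cons[simp]: "iw f (x # w) = fsmult (f x) (word w) - efree x (iw f w)"
  by (simp add: fsub_eq efree_def)
lemma iw_Nil[simp]: "iw f [] = 0" by simp
declare iw.simps[simp del]

lemma linop_ifree: "linop (ifree f)" by (simp add: ifree_def linop_lin_ext)
lemma presFA_ifree: "presFA (ifree f)" by (simp add: ifree_def presFA_lin_ext)
lemma FA_ifree[simp]: "p \<in> FA \<Longrightarrow> ifree f p \<in> FA"
  using presFA_ifree by (auto simp: presFA_def)
lemma ifree_word[simp]: "ifree f (word w) = iw f w" by (simp add: ifree_def)
lemma ifree_add: "p \<in> FA \<Longrightarrow> q \<in> FA \<Longrightarrow> ifree f (p + q) = ifree f p + ifree f q"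
  by (rule linopD(1)[OF linop_ifree])
lemma ifree_diff: "p \<in> FA \<Longrightarrow> q \<in> FA \<Longrightarrow> ifree f (p - q) = ifree f p - ifree f q"
  by (rule linop_diff[OF linop_ifree])
lemma ifree_smult: "p \<in> FA \<Longrightarrow> ifree f (fsmult c p) = fsmult c (ifree f p)"
  by (rule linopD(2)[OF linop_ifree])
lemma ifree_zero[simp]: "ifree f 0 = 0"
  by (rule linop_zero[OF linop_ifree])

lemma ifree_efree:
  assumes "p \<in> FA"
  shows "ifree f (efree x p) = fsmult (f x) p - efree x (ifree f p)"
proof (rule linop_eq[OF _ _ _ assms])
  show "linop (\<lambda>p. ifree f (efree x p))"
    by (rule linop_comp[OF linop_ifree linop_efree presFA_efree])
  show "linop (\<lambda>p. fsmult (f x) p - efree x (ifree f p))"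
    by (rule linop_minus[OF linop_smult_id linop_comp[OF linop_efree linop_ifree presFA_ifree]])
  fix w show "ifree f (efree x (word w)) = fsmult (f x) (word w) - efree x (ifree f (word w))"
    by (simp add: iw_Cons)
qed

lemma ifree_ifree_word: "ifree f (iw f w) = 0"
proof (induction w)
  case Nil then show ?case by (simp add: zero_eq)
next
  case (Cons x w)
  then show ?case
    by (simp add: iw_Cons ifree_diff ifree_smult ifree_efree)
qed

lemma ifree_ifree:
  assumes "p \<in> FA"
  shows "ifree f (ifree f p) = 0"
proof (rule linop_eq[OF _ linop_zeroop _ assms])
  show "linop (\<lambda>p. ifree f (ifree f p))"
    by (rule linop_comp[OF linop_ifree linop_ifree presFA_ifree])
qed (simp add: ifree_ifree_word)

lemma ifree_anti_word: "ifree f (iw g w) + ifree g (iw f w) = 0"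
proof (induction w)
  case Nil then show ?case by (simp add: zero_eq)
next
  case (Cons x w)
  have "ifree f (iw g (x # w)) + ifree g (iw f (x # w))
     = efree x (ifree f (iw g w) + ifree g (iw f w))"
    by (simp add: iw_Cons ifree_diff ifree_smult ifree_efree algebra_simps)
  then show ?case using Cons by simp
qed

lemma ifree_anti:
  assumes "p \<in> FA"
  shows "ifree f (ifree g p) = - ifree g (ifree f p)"
proof -
  have "ifree f (ifree g p) + ifree g (ifree f p) = 0"
  proof (rule linop_eq[OF _ linop_zeroop _ assms])
    show "linop (\<lambda>p. ifree f (ifree g p) + ifree g (ifree f p))"
      by (rule linop_plus[OF linop_comp[OF linop_ifree linop_ifree presFA_ifree] linop_comp[OF linop_ifree linop_ifree presFA_ifree]])
  qed (simp add: ifree_anti_word)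
  then show ?thesis by (simp add: eq_neg_iff_add_eq_0)
qed

lemma iw_fadd_pt: "iw (\<lambda>y. f y + g y) w = iw f w + iw g w"
  by (induction w) (simp_all add: fsmult_addc algebra_simps)
lemma iw_fsmult_pt: "iw (\<lambda>y. c * f y) w = fsmult c (iw f w)"
  by (induction w) simp_all
lemma iw_fzero_pt: "iw 0 w = 0"
  by (induction w) (simp_all add: fa_simps)

lemma iw_fadd: "iw (\<lambda>y. f y + g y) = (\<lambda>w. iw f w + iw g w)"
  using iw_fadd_pt by blast
lemma iw_fsmult: "iw (\<lambda>y. c * f y) = (\<lambda>w. fsmult c (iw f w))"
  using iw_fsmult_pt by blast
lemma iw_fzero: "iw 0 = (\<lambda>w. 0)"
  using iw_fzero_pt by blast

lemma ifree_fadd: "ifree (\<lambda>y. f y + g y) p = ifree f p + ifree g p"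
  unfolding ifree_def iw_fadd lin_ext_gadd ..
lemma ifree_fsmult: "ifree (\<lambda>y. c * f y) p = fsmult c (ifree f p)"
  unfolding ifree_def iw_fsmult lin_ext_gsmult ..
lemma ifree_fzero: "ifree 0 p = 0"
  unfolding ifree_def iw_fzero lin_ext_gzero ..

lemma opv_eq: "opv G x p = efree x p + ifree (G x) p"
  by (simp add: opv_def fadd_eq)

lemma linop_opv: "linop (opv G x)"
  unfolding opv_eq by (intro linop_plus linop_efree linop_ifree)
lemma presFA_opv: "presFA (opv G x)"
  by (simp add: presFA_def opv_eq)
lemma FA_opv[simp]: "p \<in> FA \<Longrightarrow> opv G x p \<in> FA"
  by (simp add: opv_eq)

lemma presFA_opword: "presFA (opword G w)"
  by (induction w) (simp_all add: presFA_def)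

lemma linop_opword: "linop (opword G w)"
proof (induction w)
  case Nil show ?case by (simp add: linop_def)
next
  case (Cons x w)
  have "opword G (x # w) = (\<lambda>p. opv G x (opword G w p))" by (simp add: fun_eq_iff)
  then show ?case using linop_comp[OF linop_opv Cons.IH presFA_opword] by simp
qed

lemma linop_zero_fun[simp]: "linop 0" by (simp add: linop_def fa_simps)

lemma FA_opword[simp]: "p \<in> FA \<Longrightarrow> opword G w p \<in> FA"
  using presFA_opword by (auto simp: presFA_def)

lemma rhofree_word[simp]: "rhofree G (word w) p = opword G w p"
  by (simp add: rhofree_def)

lemma linop_rhofree_t: "linop (\<lambda>t. rhofree G t p)"
  by (simp add: rhofree_def linop_lin_ext)
lemma FA_rhofree[simp]: "t \<in> FA \<Longrightarrow> p \<in> FA \<Longrightarrow> rhofree G t p \<in> FA"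
  by (simp add: rhofree_def FA_lin_ext)
lemma presFA_rhofree_t: "p \<in> FA \<Longrightarrow> presFA (\<lambda>t. rhofree G t p)"
  by (simp add: presFA_def)
lemma presFA_rhofree_p: "t \<in> FA \<Longrightarrow> presFA (rhofree G t)"
  by (simp add: presFA_def)

lemma linop_rhofree_p:
  assumes "t \<in> FA" shows "linop (rhofree G t)"
  using assms
proof (induct rule: FA_induct)
  case zero then show ?case by (simp add: rhofree_def linop_zeroop)
next
  case (step t a c)
  have "rhofree G (t + fsmult c (word a)) = (\<lambda>p. rhofree G t p + fsmult c (opword G a p))"
    using step by (simp add: rhofree_def lin_ext_add lin_ext_smult fun_eq_iff fa_simps)
  then show ?case using step
    by (simp only:) (intro linop_plus linop_smult linop_opword)
qed

lemma rhofree_efree: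
  assumes "t \<in> FA" "p \<in> FA"
  shows "rhofree G (efree x t) p = opv G x (rhofree G t p)"
proof (rule linop_eq[OF _ _ _ assms(1)])
  show "linop (\<lambda>t. rhofree G (efree x t) p)"
    by (rule linop_comp[OF linop_rhofree_t linop_efree presFA_efree])
  show "linop (\<lambda>t. opv G x (rhofree G t p))"
    by (rule linop_comp[OF linop_opv linop_rhofree_t presFA_rhofree_t[OF assms(2)]])
qed simp




section \<open>ideal\<close>

lemma gen_form1:
  "fmul (fmul (word u) (fsub (fsub (iota (x + y)) (iota x)) (iota y))) (word v)
   = word (u @ (x + y) # v) - word (u @ x # v) - word (u @ y # v)"
  by (simp add: fsub_eq iota_def fmul_diff_left fmul_diff_right fmul_word_word)

lemma gen_form2:
  "fmul (fmul (word u) (fsub (iota (scale c x)) (fsmult c (iota x)))) (word v)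
   = word (u @ scale c x # v) - fsmult c (word (u @ x # v))"
  by (simp add: fsub_eq iota_def fmul_diff_left fmul_diff_right fmul_word_word
      fmul_smult_left fmul_smult_right)

lemma gen_form3:
  "fmul (fmul (word u) (fsub (fmul (iota x) (iota x)) (fsmult (Q x) (word [])))) (word v)
   = word (u @ x # x # v) - fsmult (Q x) (word (u @ v))"
  by (simp add: fsub_eq iota_def fmul_diff_left fmul_diff_right fmul_word_word
      fmul_smult_left fmul_smult_right)

lemma I_zero[simp]: "0 \<in> cl_ideal scale Q"
  using cl_ideal.zero[of scale Q] by simp

lemma I_add[simp]: "p \<in> cl_ideal scale Q \<Longrightarrow> q \<in> cl_ideal scale Q \<Longrightarrow> p + q \<in> cl_ideal scale Q"
  using cl_ideal.add[of p scale Q q] by (simp add: fadd_eq)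

lemma I_smult[simp]: "p \<in> cl_ideal scale Q \<Longrightarrow> fsmult c p \<in> cl_ideal scale Q"
  by (rule cl_ideal.smult)

lemma I_uminus[simp]: "p \<in> cl_ideal scale Q \<Longrightarrow> - p \<in> cl_ideal scale Q"
proof -
  assume "p \<in> cl_ideal scale Q"
  moreover have "- p = fsmult (-1) p" by (simp add: fun_eq_iff fa_simps)
  ultimately show ?thesis by simp
qed

lemma I_diff[simp]: "p \<in> cl_ideal scale Q \<Longrightarrow> q \<in> cl_ideal scale Q \<Longrightarrow> p - q \<in> cl_ideal scale Q"
  using I_add[of p scale Q "- q"] by simp

lemma I_gen1: "word (u @ (x + y) # v) - word (u @ x # v) - word (u @ y # v) \<in> cl_ideal scale Q"
proof -
  have "fsub (fsub (iota (x + y)) (iota x)) (iota y) \<in> cl_gens scale Q"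
    unfolding cl_gens_def by blast
  from cl_ideal.gen[OF this, of u v] show ?thesis by (simp only: gen_form1)
qed

lemma I_gen2: "word (u @ scale c x # v) - fsmult c (word (u @ x # v)) \<in> cl_ideal scale Q"
proof -
  have "fsub (iota (scale c x)) (fsmult c (iota x)) \<in> cl_gens scale Q"
    unfolding cl_gens_def by blast
  from cl_ideal.gen[OF this, of u v] show ?thesis by (simp only: gen_form2)
qed

lemma I_gen3: "word (u @ x # x # v) - fsmult (Q x) (word (u @ v)) \<in> cl_ideal scale Q"
proof -
  have "fsub (fmul (iota x) (iota x)) (fsmult (Q x) (word [])) \<in> cl_gens scale Q"
    unfolding cl_gens_def by blast
  from cl_ideal.gen[OF this, of u v] show ?thesis by (simp only: gen_form3)
qed

lemma I_FA: "p \<in> cl_ideal scale Q \<Longrightarrow> p \<in> FA"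
proof (induction rule: cl_ideal.induct)
  case zero then show ?case by simp
next
  case (add p q) then show ?case by (simp add: fadd_eq)
next
  case (smult p c) then show ?case by simp
next
  case (gen r u v)
  then show ?case unfolding cl_gens_def
    by (auto simp only: gen_form1 gen_form2 gen_form3 FA_diff FA_word FA_smult)
qed

lemma ideal_induct[consumes 1, case_names zero add smult g1 g2 g3 efree]:
  assumes r: "r \<in> cl_ideal scale Q"
  and z: "P 0"
  and a: "\<And>p q. p \<in> cl_ideal scale Q \<Longrightarrow> q \<in> cl_ideal scale Q \<Longrightarrow> P p \<Longrightarrow> P q \<Longrightarrow> P (p + q)"
  and s: "\<And>c p. p \<in> cl_ideal scale Q \<Longrightarrow> P p \<Longrightarrow> P (fsmult c p)"
  and g1: "\<And>x y v. P (word ((x + y) # v) - word (x # v) - word (y # v))"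
  and g2: "\<And>c x v. P (word (scale c x # v) - fsmult c (word (x # v)))"
  and g3: "\<And>x v. P (word (x # x # v) - fsmult (Q x) (word v))"
  and e: "\<And>z p. p \<in> cl_ideal scale Q \<Longrightarrow> P p \<Longrightarrow> P (efree z p)"
  shows "P r"
  using r
proof (induction rule: cl_ideal.induct)
  case zero then show ?case using z by simp
next
  case (add p q) then show ?case using a by (simp add: fadd_eq)
next
  case (smult p c) then show ?case using s by simp
next
  case (gen r u v)
  have c1: "P (word (u @ (x + y) # v) - word (u @ x # v) - word (u @ y # v))" for x y
  proof (induction u)
    case Nil then show ?case using g1 by simp
  next
    case (Cons z u)
    have "word ((z # u) @ (x + y) # v) - word ((z # u) @ x # v) - word ((z # u) @ y # v)
      = efree z (word (u @ (x + y) # v) - word (u @ x # v) - word (u @ y # v))" by simp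
    then show ?case using e[OF I_gen1 Cons.IH] by simp
  qed
  have c2: "P (word (u @ scale c x # v) - fsmult c (word (u @ x # v)))" for c x
  proof (induction u)
    case Nil then show ?case using g2 by simp
  next
    case (Cons z u)
    have "word ((z # u) @ scale c x # v) - fsmult c (word ((z # u) @ x # v))
      = efree z (word (u @ scale c x # v) - fsmult c (word (u @ x # v)))" by simp
    then show ?case using e[OF I_gen2 Cons.IH] by simp
  qed
  have c3: "P (word (u @ x # x # v) - fsmult (Q x) (word (u @ v)))" for x
  proof (induction u)
    case Nil then show ?case using g3 by simp
  next
    case (Cons z u)
    have "word ((z # u) @ x # x # v) - fsmult (Q x) (word ((z # u) @ v))
      = efree z (word (u @ x # x # v) - fsmult (Q x) (word (u @ v)))" by simp
    then show ?case using e[OF I_gen3 Cons.IH] by simp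
  qed
  from gen show ?case unfolding cl_gens_def
    using c1 c2 c3 by (auto simp only: gen_form1 gen_form2 gen_form3)
qed

lemma I_efree: "p \<in> cl_ideal scale Q \<Longrightarrow> efree z p \<in> cl_ideal scale Q"
proof (induction rule: cl_ideal.induct)
  case zero then show ?case by simp
next
  case (add p q) then show ?case by (simp add: fadd_eq)
next
  case (smult p c) then show ?case by simp
next
  case (gen r u v)
  have e1: "efree z (word (u @ (x + y) # v) - word (u @ x # v) - word (u @ y # v)) \<in> cl_ideal scale Q" for x y
    using I_gen1[of "z # u" x y v scale Q] by simp
  have e2: "efree z (word (u @ scale c x # v) - fsmult c (word (u @ x # v))) \<in> cl_ideal scale Q" for c x
    using I_gen2[of "z # u" scale c x v Q] by simp
  have e3: "efree z (word (u @ x # x # v) - fsmult (Q x) (word (u @ v))) \<in> cl_ideal scale Q" for x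
    using I_gen3[of "z # u" x v Q scale] by simp
  from gen show ?case unfolding cl_gens_def
    using e1 e2 e3 by (auto simp only: gen_form1 gen_form2 gen_form3)
qed

lemma I_lin_ext:
  assumes "p \<in> FA" "\<And>w. g w \<in> cl_ideal scale Q"
  shows "lin_ext g p \<in> cl_ideal scale Q"
  using assms(1)
proof (induct rule: FA_induct)
  case zero then show ?case by simp
next
  case (step p a c)
  then show ?case by (simp add: lin_ext_add lin_ext_smult assms(2))
qed

lemma I_linop:
  assumes "linop T" "p \<in> FA" "\<And>w. T (word w) \<in> cl_ideal scale Q"
  shows "T p \<in> cl_ideal scale Q"
  using linop_ext[OF assms(1,2)] I_lin_ext[OF assms(2), of "\<lambda>w. T (word w)"] assms(3) by simp

lemma GL1: "q \<in> FA \<Longrightarrow> efree (x + y) q - efree x q - efree y q \<in> cl_ideal scale Q"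
  by (rule I_linop[where T="\<lambda>q. efree (x + y) q - efree x q - efree y q"])
     (auto intro!: linop_minus linop_efree simp: I_gen1[of "[]", simplified])

lemma GL2: "q \<in> FA \<Longrightarrow> efree (scale c x) q - fsmult c (efree x q) \<in> cl_ideal scale Q"
  by (rule I_linop[where T="\<lambda>q. efree (scale c x) q - fsmult c (efree x q)"])
     (auto intro!: linop_minus linop_efree linop_smult simp: I_gen2[of "[]", simplified])

lemma GL3: "q \<in> FA \<Longrightarrow> efree x (efree x q) - fsmult (Q x) q \<in> cl_ideal scale Q"
proof (rule I_linop[where T="\<lambda>q. efree x (efree x q) - fsmult (Q x) q"])
  show "linop (\<lambda>q. efree x (efree x q) - fsmult (Q x) q)"
    by (rule linop_minus[OF linop_comp[OF linop_efree linop_efree presFA_efree] linop_smult_id])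
  fix w show "efree x (efree x (word w)) - fsmult (Q x) (word w) \<in> cl_ideal scale Q"
    using I_gen3[of "[]" x w Q scale] by simp
qed




definition lf :: "('k::field \<Rightarrow> 'v::ab_group_add \<Rightarrow> 'v) \<Rightarrow> ('v \<Rightarrow> 'k) \<Rightarrow> bool" where
  "lf scale f \<longleftrightarrow> (\<forall>y z. f (y + z) = f y + f z) \<and> (\<forall>c y. f (scale c y) = c * f y)"

lemma bilinear_lf: "bilinear_form scale G \<Longrightarrow> lf scale (G x)"
  by (simp add: bilinear_form_def lf_def)

lemma bilinear_left:
  assumes "bilinear_form scale G"
  shows "G (x + y) = (\<lambda>z. G x z + G y z)" "G (scale c x) = (\<lambda>z. c * G x z)"
  using assms by (auto simp: bilinear_form_def)

lemma W2:
  assumes f: "lf scale f" and p: "p \<in> cl_ideal scale 0"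
  shows "ifree f p \<in> cl_ideal scale 0"
  using p
proof (induction rule: ideal_induct)
  case zero then show ?case by simp
next
  case (add p q) then show ?case by (simp add: ifree_add I_FA)
next
  case (smult c p) then show ?case by (simp add: ifree_smult I_FA)
next
  case (g1 x y v)
  let ?q = "iw f v"
  have "ifree f (word ((x + y) # v) - word (x # v) - word (y # v))
      = iw f ((x + y) # v) - iw f (x # v) - iw f (y # v)"
    by (simp only: ifree_diff FA_diff FA_word ifree_word)
  also have "\<dots> = - (efree (x + y) ?q - efree x ?q - efree y ?q)"
    using f by (simp add: lf_def fun_eq_iff fa_simps algebra_simps)
  finally show ?case using I_uminus[OF GL1[of ?q x y scale 0]] by simp
next
  case (g2 c x v)
  let ?q = "iw f v"
  have "ifree f (word (scale c x # v) - fsmult c (word (x # v)))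
      = iw f (scale c x # v) - fsmult c (iw f (x # v))"
    by (simp only: ifree_diff ifree_smult FA_smult FA_word ifree_word)
  also have "\<dots> = - (efree (scale c x) ?q - fsmult c (efree x ?q))"
    using f by (simp add: lf_def fun_eq_iff fa_simps algebra_simps)
  finally show ?case using I_uminus[OF GL2[of ?q scale c x 0]] by simp
next
  case (g3 x v)
  let ?q = "iw f v"
  have "ifree f (word (x # x # v) - fsmult (0 x) (word v))
      = iw f (x # x # v) - fsmult (0 x) (iw f v)"
    by (simp only: ifree_diff ifree_smult FA_smult FA_word ifree_word)
  also have "\<dots> = efree x (efree x ?q) - fsmult (0 x) ?q"
    by (simp add: fun_eq_iff fa_simps algebra_simps)
  finally show ?case using GL3[of ?q x 0 scale] by simp
next
  case (efree z p)
  then show ?case by (simp add: ifree_efree I_FA I_efree)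
qed

lemma W4_opv:
  assumes "lf scale (G x)" "p \<in> cl_ideal scale 0"
  shows "opv G x p \<in> cl_ideal scale 0"
  using assms by (simp add: opv_eq I_efree W2)

lemma W4_opword:
  assumes "\<And>x. lf scale (G x)" "p \<in> cl_ideal scale 0"
  shows "opword G w p \<in> cl_ideal scale 0"
  by (induction w) (simp_all add: assms W4_opv)

lemma W4_rhofree:
  assumes "\<And>x. lf scale (G x)" "t \<in> FA" "p \<in> cl_ideal scale 0"
  shows "rhofree G t p \<in> cl_ideal scale 0"
  unfolding rhofree_def using assms by (intro I_lin_ext W4_opword)

lemma W3:
  fixes scale :: "'k::field \<Rightarrow> 'v::ab_group_add \<Rightarrow> 'v" and A :: "'v \<Rightarrow> 'v \<Rightarrow> 'k"
  assumes A: "alternating_form scale A"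
    and r: "r \<in> cl_ideal scale 0"
  shows "\<forall>p\<in>FA. rhofree A r p \<in> cl_ideal scale 0"
  using r
proof (induction rule: ideal_induct)
  have bil: "bilinear_form scale A" and alt: "\<And>x. A x x = 0"
    using A by (auto simp: alternating_form_def)
  {
  case zero then show ?case by (simp add: rhofree_def)
next
  case (add p q)
  have "p \<in> FA" "q \<in> FA" using add(1,2) by (auto intro: I_FA)
  then show ?case using add(3,4) by (simp add: linopD(1)[OF linop_rhofree_t])
next
  case (smult c p)
  have "p \<in> FA" using smult(1) by (auto intro: I_FA)
  then show ?case using smult(2) by (simp add: linopD(2)[OF linop_rhofree_t])
next
  case (g1 x y v)
  show ?case
  proof
    fix p :: "('v,'k) fa" assume p: "p \<in> FA"
    let ?q = "opword A v p"
    have q: "?q \<in> FA" using p by simp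
    have "rhofree A (word ((x + y) # v) - word (x # v) - word (y # v)) p
        = opv A (x + y) ?q - opv A x ?q - opv A y ?q"
      by (simp add: linop_diff[OF linop_rhofree_t])
    also have "\<dots> = efree (x + y) ?q - efree x ?q - efree y ?q"
      by (simp add: opv_eq bilinear_left[OF bil] ifree_fadd)
    finally show "rhofree A (word ((x + y) # v) - word (x # v) - word (y # v)) p \<in> cl_ideal scale 0"
      using GL1[OF q, of x y scale 0] by simp
  qed
next
  case (g2 c x v)
  show ?case
  proof
    fix p :: "('v,'k) fa" assume p: "p \<in> FA"
    let ?q = "opword A v p"
    have q: "?q \<in> FA" using p by simp
    have "rhofree A (word (scale c x # v) - fsmult c (word (x # v))) p
        = opv A (scale c x) ?q - fsmult c (opv A x ?q)"
      by (simp add: linop_diff[OF linop_rhofree_t] linopD(2)[OF linop_rhofree_t])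
    also have "\<dots> = efree (scale c x) ?q - fsmult c (efree x ?q)"
      by (simp add: opv_eq bilinear_left[OF bil] ifree_fsmult)
    finally show "rhofree A (word (scale c x # v) - fsmult c (word (x # v))) p \<in> cl_ideal scale 0"
      using GL2[OF q, of scale c x 0] by simp
  qed
next
  case (g3 x v)
  show ?case
  proof
    fix p :: "('v,'k) fa" assume p: "p \<in> FA"
    let ?q = "opword A v p"
    have q: "?q \<in> FA" using p by simp
    have "rhofree A (word (x # x # v) - fsmult (0 x) (word v)) p
        = opv A x (opv A x ?q)"
      by (simp add: linop_diff[OF linop_rhofree_t] linopD(2)[OF linop_rhofree_t] fa_simps)
    also have "\<dots> = efree x (efree x ?q) + efree x (ifree (A x) ?q)
                   + ifree (A x) (efree x ?q) + ifree (A x) (ifree (A x) ?q)"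
      using q by (simp add: opv_eq ifree_add)
    also have "\<dots> = efree x (efree x ?q)"
      using q by (simp add: ifree_efree ifree_ifree alt)
    finally show "rhofree A (word (x # x # v) - fsmult (0 x) (word v)) p \<in> cl_ideal scale 0"
      using GL3[OF q, of x 0 scale] by (simp add: fa_simps)
  qed
next
  case (efree z r)
  show ?case
  proof
    fix p :: "('v,'k) fa" assume p: "p \<in> FA"
    have "rhofree A (efree z r) p = opv A z (rhofree A r p)"
      using efree.hyps p by (simp add: rhofree_efree I_FA)
    then show "rhofree A (efree z r) p \<in> cl_ideal scale 0"
      using efree.IH p W4_opv[OF bilinear_lf[OF bil]] by simp
  qed
  }
qed




lemma E2_word: "ifree f (opword A w (word [])) = rhofree A (iw f w) (word [])"
proof (induction w)
  case Nil then show ?case by (simp add: rhofree_def)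
next
  case (Cons x w)
  let ?L = "opword A w (word [])"
  have L: "?L \<in> FA" by simp
  have "ifree f (opword A (x # w) (word [])) = ifree f (efree x ?L) + ifree f (ifree (A x) ?L)"
    using L by (simp add: opv_eq ifree_add)
  also have "\<dots> = fsmult (f x) ?L - efree x (ifree f ?L) - ifree (A x) (ifree f ?L)"
    using L by (simp add: ifree_efree ifree_anti[of _ f "A x"])
  also have "\<dots> = fsmult (f x) ?L - opv A x (rhofree A (iw f w) (word []))"
    using Cons.IH by (simp add: opv_eq)
  also have "\<dots> = rhofree A (iw f (x # w)) (word [])"
    by (simp add: linop_diff[OF linop_rhofree_t] linopD(2)[OF linop_rhofree_t] rhofree_efree)
  finally show ?case .
qed

lemma E2:
  assumes "u \<in> FA"
  shows "ifree f (rhofree A u (word [])) = rhofree A (ifree f u) (word [])"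
proof (rule linop_eq[OF _ _ _ assms])
  show "linop (\<lambda>u. ifree f (rhofree A u (word [])))"
    by (rule linop_comp[OF linop_ifree linop_rhofree_t presFA_rhofree_t[OF FA_word]])
  show "linop (\<lambda>u. rhofree A (ifree f u) (word []))"
    by (rule linop_comp[OF linop_rhofree_t linop_ifree presFA_ifree])
qed (simp add: E2_word)

lemma E3:
  assumes u: "u \<in> FA"
  shows "opv (\<lambda>x y. F x y + A x y) x (rhofree A u (word []))
       = rhofree A (opv F x u) (word [])"
proof -
  let ?L = "rhofree A u (word [])"
  have L: "?L \<in> FA" using u by simp
  have "opv (\<lambda>x y. F x y + A x y) x ?L = efree x ?L + ifree (F x) ?L + ifree (A x) ?L"
    by (simp add: opv_eq ifree_fadd add.assoc)
  also have "\<dots> = rhofree A (efree x u) (word []) + rhofree A (ifree (F x) u) (word [])"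
    using u by (simp add: rhofree_efree E2 opv_eq add_ac)
  also have "\<dots> = rhofree A (opv F x u) (word [])"
    using u by (simp add: opv_eq linopD(1)[OF linop_rhofree_t])
  finally show ?thesis .
qed

lemma E4:
  assumes u: "u \<in> FA"
  shows "opword (\<lambda>x y. F x y + A x y) w (rhofree A u (word []))
       = rhofree A (opword F w u) (word [])"
  by (induction w) (simp_all add: u E3)

lemma E5:
  assumes t: "t \<in> FA" and u: "u \<in> FA"
  shows "rhofree (\<lambda>x y. F x y + A x y) t (rhofree A u (word []))
       = rhofree A (rhofree F t u) (word [])"
proof (rule linop_eq[OF _ _ _ t])
  show "linop (\<lambda>t. rhofree (\<lambda>x y. F x y + A x y) t (rhofree A u (word [])))"
    by (rule linop_rhofree_t)
  show "linop (\<lambda>t. rhofree A (rhofree F t u) (word []))"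
    by (rule linop_comp[OF linop_rhofree_t linop_rhofree_t presFA_rhofree_t[OF u]])
qed (simp add: E4 u)

lemma opword_zero: "opword 0 w (word []) = word w"
  by (induction w) (simp_all add: opv_eq zero_fun_apply ifree_fzero iw_fzero_pt)

lemma rhofree_zero:
  assumes "t \<in> FA" shows "rhofree 0 t (word []) = t"
proof (rule linop_eq[OF _ linop_id _ assms])
  show "linop (\<lambda>t. rhofree 0 t (word []))" by (rule linop_rhofree_t)
qed (simp add: opword_zero)

lemma lam_surj:
  assumes "t \<in> FA"
  shows "rhofree A (rhofree (\<lambda>x y. - A x y) t (word [])) (word []) = t"
proof -
  have "rhofree (\<lambda>x y. (\<lambda>x y. - A x y) x y + A x y) t (rhofree A (word []) (word []))
      = rhofree A (rhofree (\<lambda>x y. - A x y) t (word [])) (word [])"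
    by (rule E5[OF assms FA_word])
  moreover have "(\<lambda>x y. (\<lambda>x y. - A x y) x y + A x y) = 0"
    by (simp add: fun_eq_iff fa_simps)
  ultimately show ?thesis using rhofree_zero[OF assms] by simp
qed




lemma equiv_rel: "equiv FA (cl_rel scale Q)"
proof (rule equivI)
  show "cl_rel scale Q \<subseteq> FA \<times> FA" by (auto simp: cl_rel_def)
  show "refl_on FA (cl_rel scale Q)"
    by (rule refl_onI) (auto simp: cl_rel_def fsub_eq)
  show "sym (cl_rel scale Q)"
  proof (rule symI)
    fix p q assume "(p, q) \<in> cl_rel scale Q"
    then have h: "p \<in> FA" "q \<in> FA" "p - q \<in> cl_ideal scale Q" by (auto simp: cl_rel_def fsub_eq)
    have "- (p - q) \<in> cl_ideal scale Q" by (rule I_uminus[OF h(3)])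
    then have "q - p \<in> cl_ideal scale Q" by simp
    then show "(q, p) \<in> cl_rel scale Q" using h by (simp add: cl_rel_def fsub_eq)
  qed
  show "trans (cl_rel scale Q)"
  proof (rule transI)
    fix p q r assume "(p, q) \<in> cl_rel scale Q" "(q, r) \<in> cl_rel scale Q"
    then have h: "p \<in> FA" "r \<in> FA" "p - q \<in> cl_ideal scale Q" "q - r \<in> cl_ideal scale Q"
      by (auto simp: cl_rel_def fsub_eq)
    have "(p - q) + (q - r) \<in> cl_ideal scale Q" by (rule I_add[OF h(3,4)])
    moreover have "p - r = (p - q) + (q - r)" by simp
    ultimately have "p - r \<in> cl_ideal scale Q" by (simp only:)
    then show "(p, r) \<in> cl_rel scale Q" using h by (simp add: cl_rel_def fsub_eq)
  qed
qed

lemma rel_I: "p \<in> FA \<Longrightarrow> q \<in> FA \<Longrightarrow> p - q \<in> cl_ideal scale Q \<Longrightarrow> (p, q) \<in> cl_rel scale Q"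
  by (simp add: cl_rel_def fsub_eq)

lemma rel_D: "(p, q) \<in> cl_rel scale Q \<Longrightarrow> p \<in> FA \<and> q \<in> FA \<and> p - q \<in> cl_ideal scale Q"
  by (simp add: cl_rel_def fsub_eq)

lemma quot_rep:
  assumes "X \<in> FA // cl_rel scale Q"
  shows "(SOME p. p \<in> X) \<in> FA \<and> X = cl_rel scale Q `` {SOME p. p \<in> X}"
proof -
  obtain x where x: "x \<in> FA" "X = cl_rel scale Q `` {x}" using assms by (rule quotientE)
  have "x \<in> X" using x equiv_class_self[OF equiv_rel] by blast
  then have s: "(SOME p. p \<in> X) \<in> X" by (rule someI[of "\<lambda>p. p \<in> X"])
  then have xs: "(x, SOME p. p \<in> X) \<in> cl_rel scale Q" using x(2) by blast
  then have "(SOME p. p \<in> X) \<in> FA" using rel_D by blast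
  moreover have "cl_rel scale Q `` {x} = cl_rel scale Q `` {SOME p. p \<in> X}"
    by (rule equiv_class_eq[OF equiv_rel xs])
  then have "X = cl_rel scale Q `` {SOME p. p \<in> X}" using x(2) by (rule trans[rotated])
  ultimately show ?thesis by (rule conjI)
qed

lemma some_rel:
  assumes "p \<in> FA"
  shows "(p, SOME q. q \<in> cl_rel scale Q `` {p}) \<in> cl_rel scale Q"
proof -
  have "p \<in> cl_rel scale Q `` {p}" using equiv_class_self[OF equiv_rel assms] .
  then have "(SOME q. q \<in> cl_rel scale Q `` {p}) \<in> cl_rel scale Q `` {p}"
    by (rule someI[of "\<lambda>q. q \<in> cl_rel scale Q `` {p}"])
  then show ?thesis by simp
qed

lemma C1:
  assumes G: "\<And>x. lf scale (G x)"
    and a: "a \<in> FA // cl_rel scale Q'"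
    and w: "w \<in> FA"
  shows "Lambda_bar scale G a (cl_rel scale 0 `` {w})
       = cl_rel scale 0 `` {rhofree G (SOME t. t \<in> a) w}"
proof -
  let ?ta = "SOME t. t \<in> a"
  let ?w' = "SOME p. p \<in> cl_rel scale 0 `` {w}"
  have ta: "?ta \<in> FA" using quot_rep[OF a] by simp
  have ww: "(w, ?w') \<in> cl_rel scale 0" by (rule some_rel[OF w])
  then have w': "?w' \<in> FA" "w - ?w' \<in> cl_ideal scale 0" using rel_D by auto
  have "rhofree G ?ta w - rhofree G ?ta ?w' = rhofree G ?ta (w - ?w')"
    using linop_diff[OF linop_rhofree_p[OF ta] w w'(1)] by simp
  also have "\<dots> \<in> cl_ideal scale 0"
    by (rule W4_rhofree[OF G ta w'(2)])
  finally have "(rhofree G ?ta w, rhofree G ?ta ?w') \<in> cl_rel scale 0"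
    using ta w w' by (intro rel_I) auto
  then have e: "cl_rel scale 0 `` {rhofree G ?ta w} = cl_rel scale 0 `` {rhofree G ?ta ?w'}"
    by (rule equiv_class_eq[OF equiv_rel])
  have "Lambda_bar scale G a (cl_rel scale 0 `` {w}) = cl_rel scale 0 `` {rhofree G ?ta ?w'}"
    by (simp add: Lambda_bar_def cls_def)
  then show ?thesis using e by (rule trans[OF _ sym])
qed

lemma C2:
  assumes A: "alternating_form scale A" and u: "u \<in> FA"
  shows "lambda_bar scale A (cl_rel scale 0 `` {u}) = cl_rel scale 0 `` {rhofree A u (word [])}"
proof -
  have bil: "bilinear_form scale A" using A by (simp add: alternating_form_def)
  have U: "cl_rel scale 0 `` {u} \<in> FA // cl_rel scale 0" using u by (rule quotientI)
  let ?u' = "SOME t. t \<in> cl_rel scale 0 `` {u}"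
  have eq1: "lambda_bar scale A (cl_rel scale 0 `` {u}) = cl_rel scale 0 `` {rhofree A ?u' (word [])}"
    unfolding lambda_bar_def cls_def zero_eq
    by (rule C1[OF bilinear_lf[OF bil] U FA_word])
  have uu: "(u, ?u') \<in> cl_rel scale 0" by (rule some_rel[OF u])
  then have u': "?u' \<in> FA" "u - ?u' \<in> cl_ideal scale 0" using rel_D by auto
  have "rhofree A u (word []) - rhofree A ?u' (word []) = rhofree A (u - ?u') (word [])"
    using linop_diff[OF linop_rhofree_t u u'(1)] by simp
  also have "\<dots> \<in> cl_ideal scale 0"
    using W3[OF A u'(2)] by simp
  finally have "(rhofree A u (word []), rhofree A ?u' (word [])) \<in> cl_rel scale 0"
    using u u' by (intro rel_I) auto
  then have "cl_rel scale 0 `` {rhofree A u (word [])} = cl_rel scale 0 `` {rhofree A ?u' (word [])}"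
    by (rule equiv_class_eq[OF equiv_rel])
  then show ?thesis using eq1 by (rule trans[OF _ sym, rotated])
qed

theorem mainTheorem13:
  fixes scale :: "'k::field \<Rightarrow> 'v::ab_group_add \<Rightarrow> 'v"
    and F A :: "'v \<Rightarrow> 'v \<Rightarrow> 'k"
  assumes "vector_space scale"
    and "bilinear_form scale F"
    and "alternating_form scale A"
  shows "\<forall>a \<in> Cl scale (\<lambda>x. F x x). \<forall>W \<in> Ext scale.
           Lambda_bar scale (\<lambda>x y. F x y + A x y) a W
             = lambda_bar scale A
                 (Lambda_bar scale F a (inv_into (Ext scale) (lambda_bar scale A) W))"
proof (intro ballI)
  fix a W
  assume a: "a \<in> Cl scale (\<lambda>x. F x x)" and W: "W \<in> Ext scale"
  have bF: "bilinear_form scale F" by fact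
  have altA: "alternating_form scale A" by fact
  then have bA: "bilinear_form scale A" by (simp add: alternating_form_def)
  have Ext_eq: "Ext scale = FA // cl_rel scale 0" by (simp add: Ext_def Cl_def)
  have a': "a \<in> FA // cl_rel scale (\<lambda>x. F x x)" using a by (simp add: Cl_def)
  let ?ta = "SOME t. t \<in> a"
  have ta: "?ta \<in> FA" using quot_rep[OF a'] by simp
  let ?L = "lambda_bar scale A"
  let ?lam = "\<lambda>u. rhofree A u (word [])"
  have Lcls: "?L (cl_rel scale 0 `` {u}) = cl_rel scale 0 `` {?lam u}" if "u \<in> FA" for u
    by (rule C2[OF altA that])
  obtain w where w: "w \<in> FA" "W = cl_rel scale 0 `` {w}"
    using W Ext_eq by (auto elim: quotientE)
  let ?u0 = "rhofree (\<lambda>x y. - A x y) w (word [])"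
  have u0: "?u0 \<in> FA" using w by simp
  have "?L (cl_rel scale 0 `` {?u0}) = W"
    using Lcls[OF u0] lam_surj[OF w(1), of A] w(2) by simp
  moreover have "cl_rel scale 0 `` {?u0} \<in> Ext scale"
    using Ext_eq u0 by (simp add: quotientI)
  ultimately have Wimg: "W \<in> ?L ` Ext scale" by blast
  let ?U = "inv_into (Ext scale) ?L W"
  have U: "?U \<in> Ext scale" by (rule inv_into_into[OF Wimg])
  have LU: "?L ?U = W" by (rule f_inv_into_f[OF Wimg])
  obtain u where u: "u \<in> FA" "?U = cl_rel scale 0 `` {u}"
    using U Ext_eq by (auto elim: quotientE)
  have W2: "W = cl_rel scale 0 `` {?lam u}"
  proof -
    have "W = ?L ?U" using LU by (rule sym)
    also have "\<dots> = ?L (cl_rel scale 0 `` {u})" using u(2) by (rule arg_cong)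
    also have "\<dots> = cl_rel scale 0 `` {?lam u}" by (rule Lcls[OF u(1)])
    finally show ?thesis .
  qed
  have lfF': "lf scale (\<lambda>y. F x y + A x y)" for x
    using bF bA by (simp add: lf_def bilinear_form_def algebra_simps)
  have "Lambda_bar scale (\<lambda>x y. F x y + A x y) a W
      = cl_rel scale 0 `` {rhofree (\<lambda>x y. F x y + A x y) ?ta (?lam u)}"
    unfolding W2 by (rule C1[OF lfF' a']) (simp add: u)
  also have "\<dots> = cl_rel scale 0 `` {?lam (rhofree F ?ta u)}"
    by (simp add: E5[OF ta u(1)])
  also have "\<dots> = ?L (cl_rel scale 0 `` {rhofree F ?ta u})"
    using ta u(1) by (simp add: Lcls)
  also have "\<dots> = ?L (Lambda_bar scale F a ?U)"
    unfolding u(2) by (simp add: C1[OF bilinear_lf[OF bF] a' u(1)])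
  finally show "Lambda_bar scale (\<lambda>x y. F x y + A x y) a W = ?L (Lambda_bar scale F a ?U)" .
qed


end
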